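(* Let $\epsilon\in(0,1)$ and $\epsilon'=\epsilon/14$. Run Algorithm $\mathsf{DLA}$ on $(f,V,B)$ with parameter $\epsilon$. Let $S$ be its output, and let $X,Y$ be the two sets at the end of its while-loop (Phase 1). Let $O$ be an optimal solution, $\mathrm{opt}=f(O)$, and let $r\in\arg\max_{o\in O}c(o)$. Suppose $c(r)\ge(1-\epsilon')B$. Then at least one of the following holds: (e) $f(S)\ge\frac{(1-\epsilon')^2}{6}\mathrm{opt}$; (f) there exists $X'\subseteq X$ with $f(O\cup X')\le 2f(S)+\max\left\{\frac{(1-\epsilon')\mathrm{opt}}{6},\ f(S)+\frac{\epsilon'\mathrm{opt}}{6}\right\}$. Likewise, at least one of the following holds: (g) $f(S)\ge\frac{(1-\epsilon')^2}{6}\mathrm{opt}$; (h) there exists $Y'\subseteq Y$ with $f(O\cup Y')\le 2f(S)+\max\left\{\frac{(1-\epsilon')\mathrm{opt}}{6},\ f(S)+\frac{\epsilon'\mathrm{opt}}{6}\right\}$.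
   Context: Setting: $V$ is a finite ground set of size $n$. $f:2^V\to\mathbb{R}_{\ge 0}$ is a non-negative submodular set function with $f(\emptyset)=0$. Each $e\in V$ has a cost $c(e)>0$, and $c(S)=\sum_{e\in S}c(e)$. $B>0$ is a budget, and $c(e)\le B$ for every $e\in V$. An optimal solution is $O\in\arg\max\{f(T):T\subseteq V,\ c(T)\le B\}$. The notation $f(e\mid S)=f(S\cup\{e\})-f(S)$ is used. Algorithm $\mathsf{LA}$ on $(f,V,B)$ runs as follows. Let $V_1=\{e:c(e)\le B/2\}$, $e_{\max}\in\arg\max_{e\in V}f(e)$ and $X=Y=\emptyset$. Process each $e\in V_1$ once. Among $Z\in\{X,Y\}$ with $f(e\mid Z)/c(e)\ge f(Z)/B$, add $e$ to one maximizing $f(e\mid Z)/c(e)$, if any such $Z$ exists. Then for $T\in\{X,Y\}$, let $T'$ be the largest-cost set formed by the last $j$ elements added to $T$ ($0\le j\le |T|$) among those with cost at most $B$. Return the best of $X'$, $Y'$ and $\{e_{\max}\}$ under $f$. Algorithm $\mathsf{DLA}$ on $(f,V,B)$ with parameter $\epsilon\in(0,1)$ runs as follows. 1. Let $S'$ be the output of $\mathsf{LA}(f,V,B)$ and set $\Gamma=f(S')$. Set $\epsilon'=\epsilon/14$ and $\Delta=\lceil\log(1/\epsilon')/\epsilon'\rceil$. 2. Phase 1. Set $\theta=19\Gamma/(6\epsilon' B)$ and $X=Y=\emptyset$. While $\theta\ge\Gamma(1-\epsilon')/(6B)$, do the following. Process each $e\in V\setminus(X\cup Y)$ in a fixed order.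 Among $T\in\{X,Y\}$ with $c(T\cup\{e\})\le B$ and $f(e\mid T)/c(e)\ge\theta$, choose one maximizing $f(e\mid T)/c(e)$; if such a $T$ exists, add $e$ to it. After the pass, set $\theta\leftarrow(1-\epsilon')\theta$. 3. Phase 2. For $T\in\{X,Y\}$, let $T^i$ be the set of the first $i$ elements added to $T$. For each $l=0,1,\dots,\Delta$: - let $X'_{(l)}=X^i$ for the largest $i\le|X|$ with $c(X^i)\le\epsilon'B(1+\epsilon')^l$; - let $e_X\in\arg\max\{f(X'_{(l)}\cup\{e\}): e\in V,\ c(X'_{(l)}\cup\{e\})\le B\}$, and set $X_{(l)}=X'_{(l)}\cup\{e_X\}$; - define $Y'_{(l)}$, $e_Y$ and $Y_{(l)}$ analogously from $Y$. 4. Return the set $S$ of maximum $f$ value among $S'$, $X$, $Y$, $X_{(0)},\dots,X_{(\Delta)}$, $Y_{(0)},\dots,Y_{(\Delta)}$. *)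

theory Defs
  imports Complex_Main
begin

definition marg :: "('a set \<Rightarrow> real) \<Rightarrow> 'a \<Rightarrow> 'a set \<Rightarrow> real" where
  "marg f e S = f (insert e S) - f S"

definition submodular_on :: "'a set \<Rightarrow> ('a set \<Rightarrow> real) \<Rightarrow> bool" where
  "submodular_on V f \<longleftrightarrow>
     (\<forall>A B. A \<subseteq> V \<longrightarrow> B \<subseteq> V \<longrightarrow> f (A \<union> B) + f (A \<inter> B) \<le> f A + f B)"

inductive steps :: "('e \<Rightarrow> 's \<Rightarrow> 's \<Rightarrow> bool) \<Rightarrow> 'e list \<Rightarrow> 's \<Rightarrow> 's \<Rightarrow> bool"
  for R where
  steps_Nil: "steps R [] s s"
| steps_Cons: "R e s t \<Longrightarrow> steps R es t u \<Longrightarrow> steps R (e # es) s u"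

text \<open>The two sets are stored as lists in order of insertion.  Ties in the argmax are
  resolved arbitrarily (nondeterministically).\<close>
fun la_step :: "('a set \<Rightarrow> real) \<Rightarrow> ('a \<Rightarrow> real) \<Rightarrow> real \<Rightarrow> 'a
      \<Rightarrow> 'a list \<times> 'a list \<Rightarrow> 'a list \<times> 'a list \<Rightarrow> bool" where
  "la_step f c B e (X, Y) st' =
    (let rX = marg f e (set X) / c e; rY = marg f e (set Y) / c e;
         okX = (rX \<ge> f (set X) / B); okY = (rY \<ge> f (set Y) / B) in
      (okX \<and> (okY \<longrightarrow> rY \<le> rX) \<and> st' = (X @ [e], Y)) \<or>
      (okY \<and> (okX \<longrightarrow> rX \<le> rY) \<and> st' = (X, Y @ [e])) \<or>
      (\<not> okX \<and> \<not> okY \<and> st' = (X, Y)))"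

definition budget_suffix :: "('a \<Rightarrow> real) \<Rightarrow> real \<Rightarrow> 'a list \<Rightarrow> 'a set \<Rightarrow> bool" where
  "budget_suffix c B T T' \<longleftrightarrow>
     (\<exists>j \<le> length T. T' = set (drop (length T - j) T) \<and> sum c T' \<le> B \<and>
        (\<forall>j' \<le> length T. sum c (set (drop (length T - j') T)) \<le> B \<longrightarrow>
              sum c (set (drop (length T - j') T)) \<le> sum c T'))"

text \<open>S' is a possible output of LA(f,V,B) (for some processing order of V_1 and some
  tie-breaking).\<close>
definition LA_output :: "('a set \<Rightarrow> real) \<Rightarrow> ('a \<Rightarrow> real) \<Rightarrow> 'a set \<Rightarrow> real \<Rightarrow> 'a set \<Rightarrow> bool" where
  "LA_output f c V B S' \<longleftrightarrow>
     (\<exists>ord X Y X' Y' emax.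
        distinct ord \<and> set ord = {e \<in> V. c e \<le> B / 2} \<and>
        steps (la_step f c B) ord ([], []) (X, Y) \<and>
        budget_suffix c B X X' \<and> budget_suffix c B Y Y' \<and>
        emax \<in> V \<and> (\<forall>e\<in>V. f {e} \<le> f {emax}) \<and>
        S' \<in> {X', Y', {emax}} \<and> f X' \<le> f S' \<and> f Y' \<le> f S' \<and> f {emax} \<le> f S')"

text \<open>One element step of a Phase-1 pass with threshold th.  Elements already in X or Y are
  skipped (each pass processes V minus (X union Y) in the fixed order).\<close>
fun dla_step :: "('a set \<Rightarrow> real) \<Rightarrow> ('a \<Rightarrow> real) \<Rightarrow> real \<Rightarrow> real \<Rightarrow> 'a
      \<Rightarrow> 'a list \<times> 'a list \<Rightarrow> 'a list \<times> 'a list \<Rightarrow> bool" where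
  "dla_step f c B th e (X, Y) st' =
    (if e \<in> set X \<union> set Y then st' = (X, Y) else
     (let rX = marg f e (set X) / c e; rY = marg f e (set Y) / c e;
          okX = (sum c (insert e (set X)) \<le> B \<and> rX \<ge> th);
          okY = (sum c (insert e (set Y)) \<le> B \<and> rY \<ge> th) in
       (okX \<and> (okY \<longrightarrow> rY \<le> rX) \<and> st' = (X @ [e], Y)) \<or>
       (okY \<and> (okX \<longrightarrow> rX \<le> rY) \<and> st' = (X, Y @ [e])) \<or>
       (\<not> okX \<and> \<not> okY \<and> st' = (X, Y))))"

inductive phase1_iter :: "('a set \<Rightarrow> real) \<Rightarrow> ('a \<Rightarrow> real) \<Rightarrow> real \<Rightarrow> real \<Rightarrow> real \<Rightarrow> 'a list
      \<Rightarrow> nat \<Rightarrow> 'a list \<times> 'a list \<Rightarrow> bool"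
  for f c B th0 eps' ord where
  iter0: "phase1_iter f c B th0 eps' ord 0 ([], [])"
| iterS: "phase1_iter f c B th0 eps' ord i st \<Longrightarrow>
          steps (dla_step f c B (th0 * (1 - eps') ^ i)) ord st st' \<Longrightarrow>
          phase1_iter f c B th0 eps' ord (Suc i) st'"

definition prefix_budget :: "('a \<Rightarrow> real) \<Rightarrow> real \<Rightarrow> 'a list \<Rightarrow> 'a set \<Rightarrow> bool" where
  "prefix_budget c b T P \<longleftrightarrow>
     (\<exists>i \<le> length T. P = set (take i T) \<and> sum c P \<le> b \<and>
        (\<forall>i'. i < i' \<and> i' \<le> length T \<longrightarrow> \<not> sum c (set (take i' T)) \<le> b))"

definition best_augment :: "('a set \<Rightarrow> real) \<Rightarrow> ('a \<Rightarrow> real) \<Rightarrow> 'a set \<Rightarrow> real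
      \<Rightarrow> 'a set \<Rightarrow> 'a set \<Rightarrow> bool" where
  "best_augment f c V B P Z \<longleftrightarrow>
     (\<exists>e\<in>V. sum c (insert e P) \<le> B \<and> Z = insert e P \<and>
        (\<forall>e'\<in>V. sum c (insert e' P) \<le> B \<longrightarrow> f (insert e' P) \<le> f Z))"

text \<open>DLA_run f c V B eps S X Y: some execution of DLA with parameter eps returns S, and X, Y
  are the two sets at the end of Phase 1.  The processing order and tie-breaking are
  arbitrary.  Here log is the natural logarithm.\<close>
definition DLA_run :: "('a set \<Rightarrow> real) \<Rightarrow> ('a \<Rightarrow> real) \<Rightarrow> 'a set \<Rightarrow> real \<Rightarrow> real
      \<Rightarrow> 'a set \<Rightarrow> 'a set \<Rightarrow> 'a set \<Rightarrow> bool" where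
  "DLA_run f c V B eps S X Y \<longleftrightarrow>
     (let eps' = eps / 14; \<Delta> = nat \<lceil>ln (1 / eps') / eps'\<rceil> in
      \<exists>S' ord Xl Yl k XL YL.
        LA_output f c V B S' \<and>
        (let \<Gamma> = f S'; th0 = 19 * \<Gamma> / (6 * eps' * B); thr = \<Gamma> * (1 - eps') / (6 * B) in
          distinct ord \<and> set ord = V \<and>
          (\<forall>i<k. th0 * (1 - eps') ^ i \<ge> thr) \<and> \<not> (th0 * (1 - eps') ^ k \<ge> thr) \<and>
          phase1_iter f c B th0 eps' ord k (Xl, Yl) \<and> X = set Xl \<and> Y = set Yl \<and>
          (\<forall>l\<le>\<Delta>. \<exists>P. prefix_budget c (eps' * B * (1 + eps') ^ l) Xl P \<and>
                       best_augment f c V B P (XL l)) \<and>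
          (\<forall>l\<le>\<Delta>. \<exists>P. prefix_budget c (eps' * B * (1 + eps') ^ l) Yl P \<and>
                       best_augment f c V B P (YL l)) \<and>
          S \<in> {S', X, Y} \<union> XL ` {..\<Delta>} \<union> YL ` {..\<Delta>} \<and>
          (\<forall>Z \<in> {S', X, Y} \<union> XL ` {..\<Delta>} \<union> YL ` {..\<Delta>}. f Z \<le> f S)))"

end

theory Submission
  imports Defs
begin

definition pre :: "'a list \<Rightarrow> 'a \<Rightarrow> 'a set" where
  "pre L a = set (takeWhile (\<lambda>x. x \<noteq> a) L)"

lemma pre_split: "a \<notin> set xs \<Longrightarrow> pre (xs @ a # ys) a = set xs"
  unfolding pre_def by (subst takeWhile_append2) auto

lemma pre_snoc: "x \<in> set L \<Longrightarrow> pre (L @ [a]) x = pre L x"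
  unfolding pre_def by (subst takeWhile_append1) auto

lemma pre_snoc_new: "a \<notin> set L \<Longrightarrow> pre (L @ [a]) a = set L"
  using pre_split[of a L "[]"] by simp

definition grows :: "('a set \<Rightarrow> real) \<Rightarrow> ('a \<Rightarrow> 'a set \<Rightarrow> real) \<Rightarrow> 'a list \<Rightarrow> bool" where
  "grows f g L \<longleftrightarrow> (\<forall>xs a ys. L = xs @ a # ys \<longrightarrow> g a (set xs) \<le> marg f a (set xs))"

lemma grows_Nil[simp]: "grows f g []"
  unfolding grows_def by auto

lemma grows_snoc: "grows f g (L @ [a]) \<longleftrightarrow> grows f g L \<and> g a (set L) \<le> marg f a (set L)"
proof
  assume H: "grows f g (L @ [a])"
  show "grows f g L \<and> g a (set L) \<le> marg f a (set L)"
  proof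
    show "grows f g L" unfolding grows_def
    proof (intro allI impI)
      fix xs b ys assume "L = xs @ b # ys"
      then have "L @ [a] = xs @ b # (ys @ [a])" by simp
      then show "g b (set xs) \<le> marg f b (set xs)" using H unfolding grows_def by blast
    qed
    show "g a (set L) \<le> marg f a (set L)" using H unfolding grows_def by blast
  qed
next
  assume H: "grows f g L \<and> g a (set L) \<le> marg f a (set L)"
  show "grows f g (L @ [a])"
    unfolding grows_def
  proof (intro allI impI)
    fix xs b ys assume E: "L @ [a] = xs @ b # ys"
    show "g b (set xs) \<le> marg f b (set xs)"
    proof (cases ys rule: rev_cases)
      case Nil
      then show ?thesis using E H by auto
    next
      case (snoc ys' y)
      then have "L = xs @ b # ys'" using E by auto
      then show ?thesis using H unfolding grows_def by blast
    qed
  qed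
qed

lemma grows_appendD: "grows f g (A @ D) \<Longrightarrow> grows f g A"
  unfolding grows_def
proof (intro allI impI)
  fix xs b ys assume H: "\<forall>xs a ys. A @ D = xs @ a # ys \<longrightarrow> g a (set xs) \<le> marg f a (set xs)"
    and "A = xs @ b # ys"
  then have "A @ D = xs @ b # (ys @ D)" by simp
  then show "g b (set xs) \<le> marg f b (set xs)" using H by blast
qed

lemma grows_pre:
  assumes "grows f g L" "distinct L" "q \<in> set L"
  shows "g q (pre L q) \<le> marg f q (pre L q)"
proof -
  obtain xs ys where L: "L = xs @ q # ys" using assms(3) split_list by metis
  then have "q \<notin> set xs" using assms(2) by auto
  then have "pre L q = set xs" using L pre_split by metis
  then show ?thesis using assms(1) L unfolding grows_def by auto
qed

lemma telescope:
  "distinct L \<Longrightarrow> (\<Sum>q\<in>set L. marg f q (pre L q)) = f (set L) - f {}"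
proof (induction L rule: rev_induct)
  case Nil then show ?case by simp
next
  case (snoc a L)
  then have na: "a \<notin> set L" and dL: "distinct L" by auto
  have "(\<Sum>q\<in>set (L @ [a]). marg f q (pre (L @ [a]) q))
      = marg f a (pre (L@[a]) a) + (\<Sum>q\<in>set L. marg f q (pre (L @ [a]) q))"
    using na by simp
  also have "(\<Sum>q\<in>set L. marg f q (pre (L @ [a]) q)) = (\<Sum>q\<in>set L. marg f q (pre L q))"
    by (rule sum.cong) (auto simp: pre_snoc)
  also have "\<dots> = f (set L) - f {}" using snoc.IH[OF dL] .
  also have "marg f a (pre (L@[a]) a) = f (insert a (set L)) - f (set L)"
    using pre_snoc_new[OF na] by (simp add: marg_def)
  finally have X: "(\<Sum>q\<in>set (L @ [a]). marg f q (pre (L @ [a]) q)) = f (insert a (set L)) - f (set L) + (f (set L) - f {})" .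
  have "f (set (L@[a])) = f (insert a (set L))" by simp
  then show ?case using X by linarith
qed

lemma growth_T:
  "grows f (\<lambda>a Z. T * c a) L \<Longrightarrow> distinct L \<Longrightarrow> T * sum c (set L) \<le> f (set L) - f {}"
proof (induction L rule: rev_induct)
  case Nil then show ?case by simp
next
  case (snoc a L)
  have na: "a \<notin> set L" and dL: "distinct L" using snoc.prems(2) by auto
  have g: "grows f (\<lambda>a Z. T * c a) L" and m: "T * c a \<le> marg f a (set L)"
    using snoc.prems(1) grows_snoc[of f _ L a] by auto
  have ih: "T * sum c (set L) \<le> f (set L) - f {}" using snoc.IH[OF g dL] .
  have "T * sum c (set (L@[a])) = T * c a + T * sum c (set L)"
    using na by (simp add: algebra_simps)
  moreover have "f (set (L@[a])) = f (set L) + marg f a (set L)" by (simp add: marg_def)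
  ultimately show ?case using m ih by linarith
qed

lemma set_snoc: "set (L @ [a]) = insert a (set L)" by simp

lemma mono_T:
  assumes "grows f (\<lambda>a Z. T * c a) (A @ D)" "0 \<le> T" "\<forall>x\<in>set D. 0 \<le> c x"
  shows "f (set A) \<le> f (set (A @ D))"
  using assms
proof (induction D rule: rev_induct)
  case Nil then show ?case by simp
next
  case (snoc a D)
  have g: "grows f (\<lambda>a Z. T * c a) ((A @ D) @ [a])" using snoc.prems(1) by (simp only: append_assoc)
  have gs: "grows f (\<lambda>a Z. T * c a) (A @ D) \<and> T * c a \<le> marg f a (set (A @ D))"
    using iffD1[OF grows_snoc g] by (simp only:)
  have ca: "0 \<le> c a" by (rule bspec[OF snoc.prems(3)]) simp
  have Tc: "0 \<le> T * c a" by (rule mult_nonneg_nonneg[OF snoc.prems(2) ca])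
  have e1: "f (set ((A @ D) @ [a])) = f (set (A @ D)) + marg f a (set (A @ D))"
    unfolding set_snoc marg_def by linarith
  have 1: "f (set (A @ D)) \<le> f (set ((A @ D) @ [a]))" using gs Tc e1 by linarith
  have d: "\<forall>x\<in>set D. 0 \<le> c x" using snoc.prems(3) unfolding set_snoc ball_simps by (rule conjunct2)
  have 2: "f (set A) \<le> f (set (A @ D))" using snoc.IH[OF conjunct1[OF gs] snoc.prems(2) d] .
  show ?case using 1 2 by (simp only: append_assoc)
qed

lemma sum_h_le:
  assumes "finite W" "distinct L" "\<forall>q\<in>set L. 0 \<le> marg f q (pre L q)"
  shows "(\<Sum>w\<in>W. if w \<in> set L then marg f w (pre L w) else 0) \<le> f (set L) - f {}"
proof -
  have "(\<Sum>w\<in>W. if w \<in> set L then marg f w (pre L w) else 0) = (\<Sum>w\<in>W \<inter> set L. marg f w (pre L w))"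
    using sum.inter_restrict[OF assms(1), of "\<lambda>w. marg f w (pre L w)" "set L"] by simp
  also have "\<dots> \<le> (\<Sum>w\<in>set L. marg f w (pre L w))"
    by (rule sum_mono2) (use assms in auto)
  also have "\<dots> = f (set L) - f {}" using telescope[OF assms(2)] .
  finally show ?thesis .
qed

locale smod =
  fixes f :: "'a set \<Rightarrow> real" and V :: "'a set" and c :: "'a \<Rightarrow> real" and B :: real
  assumes finV: "finite V" and f0: "f {} = 0" and fnn: "\<And>A. A \<subseteq> V \<Longrightarrow> 0 \<le> f A"
    and sub: "submodular_on V f" and cpos: "\<And>e. e \<in> V \<Longrightarrow> 0 < c e" and Bpos: "0 < B"
begin

lemma submod: "A \<subseteq> V \<Longrightarrow> C \<subseteq> V \<Longrightarrow> f (A \<union> C) + f (A \<inter> C) \<le> f A + f C"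
  using sub unfolding submodular_on_def by blast

lemma marg_mono:
  assumes "A \<subseteq> C" "C \<subseteq> V" "e \<in> V" "e \<notin> C"
  shows "marg f e C \<le> marg f e A"
proof -
  have "insert e A \<union> C = insert e C" using assms by auto
  moreover have "insert e A \<inter> C = A" using assms by auto
  moreover have "insert e A \<subseteq> V" using assms by auto
  ultimately show ?thesis using submod[of "insert e A" C] assms unfolding marg_def by auto
qed

lemma subadd: "A \<subseteq> V \<Longrightarrow> C \<subseteq> V \<Longrightarrow> f (A \<union> C) \<le> f A + f C"
proof -
  assume a: "A \<subseteq> V" "C \<subseteq> V"
  then have "A \<inter> C \<subseteq> V" by blast
  then show ?thesis using submod[OF a] fnn[of "A \<inter> C"] by linarith
qed

lemma union_bound:
  assumes "finite W" "W \<subseteq> V" "A \<subseteq> V"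
  shows "f (A \<union> W) \<le> f A + (\<Sum>w\<in>W - A. marg f w A)"
  using assms
proof (induction W rule: finite_induct)
  case empty then show ?case by simp
next
  case (insert x W)
  show ?case
  proof (cases "x \<in> A")
    case True
    then have "A \<union> insert x W = A \<union> W" "insert x W - A = W - A" by auto
    then show ?thesis using insert by auto
  next
    case False
    have e1: "insert x W - A = insert x (W - A)" using False by auto
    have "x \<notin> W - A" using insert by auto
    then have s: "(\<Sum>w\<in>insert x W - A. marg f w A) = marg f x A + (\<Sum>w\<in>W - A. marg f w A)"
      using e1 insert(1) by simp
    have "f (A \<union> insert x W) = f (A \<union> W) + marg f x (A \<union> W)"
      unfolding marg_def by simp
    also have "marg f x (A \<union> W) \<le> marg f x A"
      using marg_mono[of A "A \<union> W" x] insert False by auto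
    finally show ?thesis using insert s by auto
  qed
qed

lemma twin:
  assumes "A \<subseteq> V" "X \<subseteq> V" "Y \<subseteq> V" "X \<inter> Y = {}"
  shows "f A \<le> f (A \<union> X) + f (A \<union> Y)"
proof -
  have "(A \<union> X) \<inter> (A \<union> Y) = A" using assms by auto
  moreover have "(A \<union> X) \<union> (A \<union> Y) \<subseteq> V" using assms by auto
  ultimately show ?thesis using submod[of "A \<union> X" "A \<union> Y"] fnn[of "(A \<union> X) \<union> (A \<union> Y)"] assms
    by auto
qed

end

lemma dla_step_cases:
  assumes "dla_step f c B th e (X,Y) t"
  obtains (skip) "e \<in> set X \<union> set Y" "t = (X,Y)"
  | (addX) "e \<notin> set X" "e \<notin> set Y" "t = (X@[e],Y)" "sum c (insert e (set X)) \<le> B"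
      "th \<le> marg f e (set X) / c e"
      "sum c (insert e (set Y)) \<le> B \<and> th \<le> marg f e (set Y) / c e \<longrightarrow> marg f e (set Y) / c e \<le> marg f e (set X) / c e"
  | (addY) "e \<notin> set X" "e \<notin> set Y" "t = (X,Y@[e])" "sum c (insert e (set Y)) \<le> B"
      "th \<le> marg f e (set Y) / c e"
      "sum c (insert e (set X)) \<le> B \<and> th \<le> marg f e (set X) / c e \<longrightarrow> marg f e (set X) / c e \<le> marg f e (set Y) / c e"
  | (none) "e \<notin> set X" "e \<notin> set Y" "t = (X,Y)"
      "\<not> (sum c (insert e (set X)) \<le> B \<and> th \<le> marg f e (set X) / c e)"
  using assms by (auto simp: Let_def split: if_splits)

lemma dla_step_swap:
  "dla_step f c B th e s t \<Longrightarrow> dla_step f c B th e (prod.swap s) (prod.swap t)"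
  by (cases s; cases t) (auto simp: Let_def split: if_splits)

lemma steps_map:
  assumes "\<And>e s t. R e s t \<Longrightarrow> R' e (h s) (h t)"
  shows "steps R es s u \<Longrightarrow> steps R' es (h s) (h u)"
  by (induction rule: steps.induct) (auto intro: steps.intros assms)

lemma dla_steps_ext:
  "steps (dla_step f c B th) es s u \<Longrightarrow> \<exists>zs ws. fst u = fst s @ zs \<and> snd u = snd s @ ws"
proof (induction rule: steps.induct)
  case (steps_Nil s) then show ?case by auto
next
  case (steps_Cons e s t es u)
  obtain X Y where s: "s = (X,Y)" by (cases s)
  have "\<exists>zs ws. fst t = fst s @ zs \<and> snd t = snd s @ ws"
    using steps_Cons(1) unfolding s by (cases rule: dla_step_cases) auto
  then show ?case using steps_Cons(3) by (metis append.assoc)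
qed

context smod begin

definition IDL :: "real \<Rightarrow> 'a list \<Rightarrow> 'a list \<Rightarrow> bool" where
  "IDL T X Y \<longleftrightarrow> distinct X \<and> distinct Y \<and> set X \<inter> set Y = {} \<and> set X \<subseteq> V \<and> set Y \<subseteq> V \<and>
     grows f (\<lambda>a Z. T * c a) X \<and> grows f (\<lambda>a Z. T * c a) Y \<and>
     (\<forall>e\<in>set Y. B < c e + sum c (set X) \<or> marg f e (set X) \<le> marg f e (pre Y e)) \<and>
     (\<forall>e\<in>set X. B < c e + sum c (set Y) \<or> marg f e (set Y) \<le> marg f e (pre X e))"

lemma IDL_swap: "IDL T X Y \<longleftrightarrow> IDL T Y X"
  unfolding IDL_def by blast

lemma IDL_Nil: "IDL T [] []"
  unfolding IDL_def by simp

lemma IDL_addX: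
  assumes I: "IDL T X Y" and e: "e \<in> V" "e \<notin> set X" "e \<notin> set Y" and Tth: "T \<le> th"
    and okX: "sum c (insert e (set X)) \<le> B" "th \<le> marg f e (set X) / c e"
    and cmp: "sum c (insert e (set Y)) \<le> B \<and> th \<le> marg f e (set Y) / c e \<longrightarrow> marg f e (set Y) / c e \<le> marg f e (set X) / c e"
  shows "IDL T (X@[e]) Y"
proof -
  have ce: "0 < c e" using cpos e by auto
  have dX: "distinct X" and dY: "distinct Y" and dj: "set X \<inter> set Y = {}" and sX: "set X \<subseteq> V"
    and sY: "set Y \<subseteq> V" and gX: "grows f (\<lambda>a Z. T * c a) X" and gY: "grows f (\<lambda>a Z. T * c a) Y"
    and JY: "\<forall>e\<in>set Y. B < c e + sum c (set X) \<or> marg f e (set X) \<le> marg f e (pre Y e)"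
    and JX: "\<forall>e\<in>set X. B < c e + sum c (set Y) \<or> marg f e (set Y) \<le> marg f e (pre X e)"
    using I unfolding IDL_def by auto
  have mX: "th * c e \<le> marg f e (set X)" using okX(2) ce by (simp add: le_divide_eq)
  have "T * c e \<le> th * c e" using Tth ce by (simp add: mult_right_mono)
  then have g1: "grows f (\<lambda>a Z. T * c a) (X @ [e])" using gX mX grows_snoc by fastforce
  have cX: "sum c (set (X@[e])) = c e + sum c (set X)" using e(2) by simp
  have JY': "\<forall>e'\<in>set Y. B < c e' + sum c (set (X@[e])) \<or> marg f e' (set (X@[e])) \<le> marg f e' (pre Y e')"
  proof
    fix e' assume e': "e' \<in> set Y"
    have n: "e' \<notin> set (X@[e])" using e' dj e(3) by auto
    have mm: "marg f e' (set (X@[e])) \<le> marg f e' (set X)"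
      using marg_mono[of "set X" "set (X@[e])" e'] n e' sX sY e by auto
    show "B < c e' + sum c (set (X@[e])) \<or> marg f e' (set (X@[e])) \<le> marg f e' (pre Y e')"
      using JY e' mm cX ce by force
  qed
  have new: "B < c e + sum c (set Y) \<or> marg f e (set Y) \<le> marg f e (set X)"
  proof (cases "sum c (insert e (set Y)) \<le> B \<and> th \<le> marg f e (set Y) / c e")
    case True
    then have "marg f e (set Y) / c e \<le> marg f e (set X) / c e" using cmp by blast
    then show ?thesis using ce by (simp add: divide_le_cancel)
  next
    case False
    show ?thesis
    proof (cases "sum c (insert e (set Y)) \<le> B")
      case True
      then have "marg f e (set Y) / c e < th" using False by auto
      then have "marg f e (set Y) / c e < marg f e (set X) / c e" using okX(2) by linarith
      then show ?thesis using ce by (simp add: divide_less_cancel)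
    next
      case False
      then show ?thesis using e(3) by simp
    qed
  qed
  have JX': "\<forall>e'\<in>set (X@[e]). B < c e' + sum c (set Y) \<or> marg f e' (set Y) \<le> marg f e' (pre (X@[e]) e')"
  proof
    fix e' assume e': "e' \<in> set (X@[e])"
    show "B < c e' + sum c (set Y) \<or> marg f e' (set Y) \<le> marg f e' (pre (X@[e]) e')"
    proof (cases "e' \<in> set X")
      case True
      then show ?thesis using JX pre_snoc[OF True] by auto
    next
      case False
      then have "e' = e" using e' by auto
      then show ?thesis using new pre_snoc_new[OF e(2)] by simp
    qed
  qed
  show ?thesis unfolding IDL_def
    using dX dY dj sX sY e g1 gY JY' JX' by auto
qed

lemma IDL_step:
  assumes "dla_step f c B th e (X,Y) t" "IDL T X Y" "T \<le> th" "e \<in> V"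
  shows "IDL T (fst t) (snd t)"
  using assms(1)
proof (cases rule: dla_step_cases)
  case skip then show ?thesis using assms by simp
next
  case addX then show ?thesis using IDL_addX[OF assms(2) assms(4) _ _ assms(3)] by simp
next
  case addY
  have "IDL T Y X" using assms(2) IDL_swap by blast
  then have "IDL T (Y@[e]) X" using IDL_addX[of T Y X e th] addY assms by simp
  then show ?thesis using addY IDL_swap by simp
next
  case none then show ?thesis using assms by simp
qed

lemma IDL_steps:
  "steps (dla_step f c B th) es s u \<Longrightarrow> IDL T (fst s) (snd s) \<Longrightarrow> T \<le> th \<Longrightarrow> set es \<subseteq> V
   \<Longrightarrow> IDL T (fst u) (snd u)"
proof (induction rule: steps.induct)
  case (steps_Nil s) then show ?case by simp
next
  case (steps_Cons e s t es u)
  have "dla_step f c B th e (fst s, snd s) t" using steps_Cons(1) by simp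
  moreover have "e \<in> V" using steps_Cons.prems(3) by simp
  ultimately have "IDL T (fst t) (snd t)" using IDL_step steps_Cons.prems(1,2) by blast
  then show ?case using steps_Cons by auto
qed

end

lemma phase1_swap:
  "phase1_iter f c B th0 eps' ord n st \<Longrightarrow> phase1_iter f c B th0 eps' ord n (prod.swap st)"
proof (induction rule: phase1_iter.induct)
  case iter0 then show ?case using phase1_iter.iter0 by fastforce
next
  case (iterS i st st')
  have "steps (dla_step f c B (th0 * (1 - eps') ^ i)) ord (prod.swap st) (prod.swap st')"
    using steps_map[of "dla_step f c B (th0 * (1 - eps') ^ i)" "dla_step f c B (th0 * (1 - eps') ^ i)" prod.swap, OF dla_step_swap iterS(2)] .
  then show ?case using phase1_iter.iterS[OF iterS(3)] by blast
qed

lemma phase1_prefix: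
  "phase1_iter f c B th0 eps' ord n st \<Longrightarrow> m \<le> n \<Longrightarrow>
   \<exists>st'. phase1_iter f c B th0 eps' ord m st' \<and> (\<exists>zs ws. fst st = fst st' @ zs \<and> snd st = snd st' @ ws)"
proof (induction arbitrary: m rule: phase1_iter.induct)
  case iter0 then show ?case using phase1_iter.iter0 by fastforce
next
  case (iterS i st st')
  show ?case
  proof (cases "m = Suc i")
    case True
    then show ?thesis using phase1_iter.iterS[OF iterS(1,2)] by (intro exI[of _ st']) auto
  next
    case False
    then have "m \<le> i" using iterS(4) by simp
    then obtain s1 zs ws where s1: "phase1_iter f c B th0 eps' ord m s1"
      "fst st = fst s1 @ zs" "snd st = snd s1 @ ws" using iterS(3) by blast
    obtain zs' ws' where "fst st' = fst st @ zs'" "snd st' = snd st @ ws'"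
      using dla_steps_ext[OF iterS(2)] by blast
    then show ?thesis using s1 by (intro exI[of _ s1]) auto
  qed
qed

context smod begin

definition PD :: "real \<Rightarrow> 'a set \<Rightarrow> 'a list \<Rightarrow> 'a list \<Rightarrow> bool" where
  "PD th D X Y \<longleftrightarrow> (\<forall>e\<in>D. e \<in> set X \<or> e \<in> set Y \<or> B < c e + sum c (set X) \<or> marg f e (set X) < th * c e)"

lemma sumc_mono: "A \<subseteq> C \<Longrightarrow> C \<subseteq> V \<Longrightarrow> sum c A \<le> sum c C"
  using cpos finV by (intro sum_mono2) (auto intro: finite_subset less_imp_le)

lemma PD_mono:
  assumes "PD th D X Y" "D \<subseteq> V" "set X' \<subseteq> V" "set X \<subseteq> set X'" "set Y \<subseteq> set Y'"
  shows "PD th D X' Y'"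
  unfolding PD_def
proof
  fix e assume e: "e \<in> D"
  show "e \<in> set X' \<or> e \<in> set Y' \<or> B < c e + sum c (set X') \<or> marg f e (set X') < th * c e"
  proof (cases "e \<in> set X'")
    case False
    have "marg f e (set X') \<le> marg f e (set X)" using marg_mono[of "set X" "set X'" e] assms e False by auto
    moreover have "sum c (set X) \<le> sum c (set X')" using sumc_mono assms by blast
    moreover have "e \<in> set X \<or> e \<in> set Y \<or> B < c e + sum c (set X) \<or> marg f e (set X) < th * c e"
      using assms(1) e unfolding PD_def by blast
    ultimately show ?thesis using assms(4,5) by force
  qed simp
qed

lemma PD_step:
  assumes st: "dla_step f c B th e (X,Y) t" and I: "IDL T X Y" "T \<le> th" "e \<in> V"
    and D: "D \<subseteq> V" "PD th D X Y"
  shows "PD th (insert e D) (fst t) (snd t)"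
proof -
  have I': "IDL T (fst t) (snd t)" using IDL_step[OF st I] .
  have sub1: "set X \<subseteq> set (fst t)"
    using st by (cases rule: dla_step_cases) auto
  have sub2: "set Y \<subseteq> set (snd t)"
    using st by (cases rule: dla_step_cases) auto
  note sub = sub1 sub2
  have m: "PD th D (fst t) (snd t)"
    using PD_mono[OF D(2) D(1) _ sub] I' unfolding IDL_def by blast
  have "e \<in> set (fst t) \<or> e \<in> set (snd t) \<or> B < c e + sum c (set (fst t)) \<or> marg f e (set (fst t)) < th * c e"
    using st
  proof (cases rule: dla_step_cases)
    case none
    have ce: "0 < c e" using cpos I(3) by auto
    show ?thesis
    proof (cases "sum c (insert e (set X)) \<le> B")
      case True
      then have "marg f e (set X) / c e < th" using none by auto
      then have "marg f e (set X) < th * c e" using ce by (simp add: divide_less_eq)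
      then show ?thesis using none by simp
    next
      case False then show ?thesis using none by simp
    qed
  qed auto
  then show ?thesis using m unfolding PD_def by blast
qed

lemma PD_steps:
  "steps (dla_step f c B th) es s u \<Longrightarrow> IDL T (fst s) (snd s) \<Longrightarrow> T \<le> th \<Longrightarrow> set es \<subseteq> V
   \<Longrightarrow> D \<subseteq> V \<Longrightarrow> PD th D (fst s) (snd s) \<Longrightarrow> PD th (D \<union> set es) (fst u) (snd u)"
proof (induction arbitrary: D rule: steps.induct)
  case (steps_Nil s) then show ?case by simp
next
  case (steps_Cons e s t es u)
  have st: "dla_step f c B th e (fst s, snd s) t" using steps_Cons(1) by simp
  have eV: "e \<in> V" using steps_Cons.prems(3) by simp
  have I: "IDL T (fst t) (snd t)" using IDL_step[OF st steps_Cons.prems(1,2) eV] .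
  have P: "PD th (insert e D) (fst t) (snd t)" using PD_step[OF st steps_Cons.prems(1,2) eV steps_Cons.prems(4,5)] .
  have "PD th (insert e D \<union> set es) (fst u) (snd u)"
    using steps_Cons.IH[OF I steps_Cons.prems(2) _ _ P] steps_Cons.prems(3,4) eV by auto
  then show ?case by simp
qed

lemma phase1_IDL:
  "phase1_iter f c B th0 eps' ord n st \<Longrightarrow> (\<forall>i<n. T \<le> th0 * (1 - eps') ^ i) \<Longrightarrow> set ord \<subseteq> V
   \<Longrightarrow> IDL T (fst st) (snd st)"
proof (induction rule: phase1_iter.induct)
  case iter0 then show ?case using IDL_Nil by simp
next
  case (iterS i st st')
  have "IDL T (fst st) (snd st)" using iterS by auto
  then show ?case using IDL_steps[OF iterS(2)] iterS.prems by auto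
qed

end

lemma la_step_cases:
  assumes "la_step f c B e (X,Y) t"
  obtains (addX) "t = (X@[e],Y)" "f (set X) / B \<le> marg f e (set X) / c e"
      "f (set Y) / B \<le> marg f e (set Y) / c e \<longrightarrow> marg f e (set Y) / c e \<le> marg f e (set X) / c e"
  | (addY) "t = (X,Y@[e])" "f (set Y) / B \<le> marg f e (set Y) / c e"
      "f (set X) / B \<le> marg f e (set X) / c e \<longrightarrow> marg f e (set X) / c e \<le> marg f e (set Y) / c e"
  | (none) "t = (X,Y)" "\<not> f (set X) / B \<le> marg f e (set X) / c e" "\<not> f (set Y) / B \<le> marg f e (set Y) / c e"
  using assms by (auto simp: Let_def)

lemma la_step_swap:
  "la_step f c B e s t \<Longrightarrow> la_step f c B e (prod.swap s) (prod.swap t)"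
  by (cases s; cases t) (auto simp: Let_def)

context smod begin

definition ILA :: "'a list \<Rightarrow> 'a list \<Rightarrow> bool" where
  "ILA X Y \<longleftrightarrow> distinct X \<and> distinct Y \<and> set X \<inter> set Y = {} \<and> set X \<subseteq> V \<and> set Y \<subseteq> V \<and>
     grows f (\<lambda>a Z. c a * f Z / B) X \<and> grows f (\<lambda>a Z. c a * f Z / B) Y \<and>
     (\<forall>e\<in>set Y. marg f e (set X) \<le> marg f e (pre Y e) \<or> marg f e (set X) < c e * f (set X) / B) \<and>
     (\<forall>e\<in>set X. marg f e (set Y) \<le> marg f e (pre X e) \<or> marg f e (set Y) < c e * f (set Y) / B)"

lemma ILA_swap: "ILA X Y \<longleftrightarrow> ILA Y X"
  unfolding ILA_def by blast

lemma ILA_Nil: "ILA [] []"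
  unfolding ILA_def by simp

lemma cf_mono: "e \<in> V \<Longrightarrow> a \<le> b \<Longrightarrow> c e * a / B \<le> c e * b / B"
  using cpos Bpos by (simp add: divide_right_mono mult_left_mono less_imp_le)

lemma ILA_addX:
  assumes I: "ILA X Y" and e: "e \<in> V" "e \<notin> set X" "e \<notin> set Y"
    and okX: "f (set X) / B \<le> marg f e (set X) / c e"
    and cmp: "f (set Y) / B \<le> marg f e (set Y) / c e \<longrightarrow> marg f e (set Y) / c e \<le> marg f e (set X) / c e"
  shows "ILA (X@[e]) Y \<and> f (set X) \<le> f (set (X@[e]))"
proof -
  have ce: "0 < c e" using cpos e by auto
  have dX: "distinct X" and dY: "distinct Y" and dj: "set X \<inter> set Y = {}" and sX: "set X \<subseteq> V"
    and sY: "set Y \<subseteq> V" and gX: "grows f (\<lambda>a Z. c a * f Z / B) X" and gY: "grows f (\<lambda>a Z. c a * f Z / B) Y"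
    and JY: "\<forall>e\<in>set Y. marg f e (set X) \<le> marg f e (pre Y e) \<or> marg f e (set X) < c e * f (set X) / B"
    and JX: "\<forall>e\<in>set X. marg f e (set Y) \<le> marg f e (pre X e) \<or> marg f e (set Y) < c e * f (set Y) / B"
    using I unfolding ILA_def by auto
  have mX0: "f (set X) / B * c e \<le> marg f e (set X)" using okX ce by (simp add: le_divide_eq)
  have mX: "c e * f (set X) / B \<le> marg f e (set X)" using mX0 by (simp add: field_simps)
  have fX: "0 \<le> f (set X)" using fnn sX by auto
  have "0 \<le> c e * f (set X) / B" using ce fX Bpos by simp
  then have fmon: "f (set X) \<le> f (set (X@[e]))" using mX unfolding marg_def by simp
  have g1: "grows f (\<lambda>a Z. c a * f Z / B) (X @ [e])" using gX mX grows_snoc by fastforce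
  have JY': "\<forall>e'\<in>set Y. marg f e' (set (X@[e])) \<le> marg f e' (pre Y e') \<or> marg f e' (set (X@[e])) < c e' * f (set (X@[e])) / B"
  proof
    fix e' assume e': "e' \<in> set Y"
    have n: "e' \<notin> set (X@[e])" using e' dj e(3) by auto
    have mm: "marg f e' (set (X@[e])) \<le> marg f e' (set X)"
      using marg_mono[of "set X" "set (X@[e])" e'] n e' sX sY e by auto
    have cc: "c e' * f (set X) / B \<le> c e' * f (set (X@[e])) / B" using cf_mono[of e' ] e' sY fmon by auto
    show "marg f e' (set (X@[e])) \<le> marg f e' (pre Y e') \<or> marg f e' (set (X@[e])) < c e' * f (set (X@[e])) / B"
      using JY e' mm cc by force
  qed
  have new: "marg f e (set Y) \<le> marg f e (set X) \<or> marg f e (set Y) < c e * f (set Y) / B"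
  proof (cases "f (set Y) / B \<le> marg f e (set Y) / c e")
    case True
    then have "marg f e (set Y) / c e \<le> marg f e (set X) / c e" using cmp by blast
    then show ?thesis using ce by (simp add: divide_le_cancel)
  next
    case False
    then have "marg f e (set Y) / c e < f (set Y) / B" by linarith
    then have "marg f e (set Y) < f (set Y) / B * c e" by (rule pos_divide_less_eq[THEN iffD1, OF ce])
    then show ?thesis by (simp add: field_simps)
  qed
  have JX': "\<forall>e'\<in>set (X@[e]). marg f e' (set Y) \<le> marg f e' (pre (X@[e]) e') \<or> marg f e' (set Y) < c e' * f (set Y) / B"
  proof
    fix e' assume e': "e' \<in> set (X@[e])"
    show "marg f e' (set Y) \<le> marg f e' (pre (X@[e]) e') \<or> marg f e' (set Y) < c e' * f (set Y) / B"
    proof (cases "e' \<in> set X")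
      case True
      then show ?thesis using JX pre_snoc[OF True] by auto
    next
      case False
      then have "e' = e" using e' by auto
      then show ?thesis using new pre_snoc_new[OF e(2)] by simp
    qed
  qed
  show ?thesis unfolding ILA_def
    using dX dY dj sX sY e g1 gY JY' JX' fmon by auto
qed

definition PL :: "'a set \<Rightarrow> 'a list \<Rightarrow> 'a list \<Rightarrow> bool" where
  "PL D X Y \<longleftrightarrow> (\<forall>e\<in>D. e \<in> set X \<or> e \<in> set Y \<or> marg f e (set X) < c e * f (set X) / B)"

lemma PL_mono:
  assumes "PL D X Y" "D \<subseteq> V" "set X' \<subseteq> V" "set X \<subseteq> set X'" "set Y \<subseteq> set Y'" "f (set X) \<le> f (set X')"
  shows "PL D X' Y'"
  unfolding PL_def
proof
  fix e assume e: "e \<in> D"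
  show "e \<in> set X' \<or> e \<in> set Y' \<or> marg f e (set X') < c e * f (set X') / B"
  proof (cases "e \<in> set X'")
    case False
    have "marg f e (set X') \<le> marg f e (set X)" using marg_mono[of "set X" "set X'" e] assms e False by auto
    moreover have "c e * f (set X) / B \<le> c e * f (set X') / B" using cf_mono[of e] assms e by auto
    moreover have "e \<in> set X \<or> e \<in> set Y \<or> marg f e (set X) < c e * f (set X) / B"
      using assms(1) e unfolding PL_def by blast
    ultimately show ?thesis using assms(4,5) by force
  qed simp
qed

lemma LA_step:
  assumes st: "la_step f c B e (X,Y) t" and I: "ILA X Y" and e: "e \<in> V" "e \<notin> set X" "e \<notin> set Y"
    and D: "D \<subseteq> V" "PL D X Y"
  shows "ILA (fst t) (snd t) \<and> PL (insert e D) (fst t) (snd t) \<and> set (fst t) \<union> set (snd t) \<subseteq> insert e (set X \<union> set Y)"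
  using st
proof (cases rule: la_step_cases)
  case addX
  have A: "ILA (X@[e]) Y" "f (set X) \<le> f (set (X@[e]))" using ILA_addX[OF I e addX(2,3)] by auto
  have "PL D (X@[e]) Y" using PL_mono[OF D(2) D(1) _ _ _ A(2)] A(1) unfolding ILA_def by auto
  then have "PL (insert e D) (X@[e]) Y" unfolding PL_def by auto
  then show ?thesis using A addX by auto
next
  case addY
  have I': "ILA Y X" using I ILA_swap by blast
  have A: "ILA (Y@[e]) X" "f (set Y) \<le> f (set (Y@[e]))" using ILA_addX[OF I' e(1,3,2) addY(2,3)] by auto
  have A1: "ILA X (Y@[e])" using A(1) ILA_swap by blast
  have "PL D X (Y@[e])" using PL_mono[OF D(2) D(1), of X "Y@[e]"] I unfolding ILA_def by auto
  then have "PL (insert e D) X (Y@[e])" unfolding PL_def by auto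
  then show ?thesis using A1 addY by auto
next
  case none
  have ce: "0 < c e" using cpos e by auto
  have "marg f e (set X) / c e < f (set X) / B" using none(2) by linarith
  then have "marg f e (set X) < f (set X) / B * c e" by (rule pos_divide_less_eq[THEN iffD1, OF ce])
  then have "marg f e (set X) < c e * f (set X) / B" by (simp add: field_simps)
  then have "PL (insert e D) X Y" using D(2) unfolding PL_def by auto
  then show ?thesis using I none by auto
qed

lemma LA_steps:
  "steps (la_step f c B) es s u \<Longrightarrow> distinct es \<Longrightarrow> set es \<subseteq> V \<Longrightarrow>
   set es \<inter> (set (fst s) \<union> set (snd s)) = {} \<Longrightarrow> ILA (fst s) (snd s) \<Longrightarrow> D \<subseteq> V \<Longrightarrow> PL D (fst s) (snd s) \<Longrightarrow>
   ILA (fst u) (snd u) \<and> PL (D \<union> set es) (fst u) (snd u) \<and> set (fst u) \<union> set (snd u) \<subseteq> set (fst s) \<union> set (snd s) \<union> set es"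
proof (induction arbitrary: D rule: steps.induct)
  case (steps_Nil s) then show ?case by simp
next
  case (steps_Cons e s t es u)
  have st: "la_step f c B e (fst s, snd s) t" using steps_Cons(1) by simp
  have eV: "e \<in> V" "e \<notin> set (fst s)" "e \<notin> set (snd s)" using steps_Cons.prems by auto
  have R: "ILA (fst t) (snd t) \<and> PL (insert e D) (fst t) (snd t) \<and> set (fst t) \<union> set (snd t) \<subseteq> insert e (set (fst s) \<union> set (snd s))"
    using LA_step[OF st steps_Cons.prems(4) eV steps_Cons.prems(5,6)] .
  have d: "distinct es" "set es \<subseteq> V" "set es \<inter> (set (fst t) \<union> set (snd t)) = {}" "insert e D \<subseteq> V"
    using steps_Cons.prems R eV by auto
  have "ILA (fst u) (snd u) \<and> PL (insert e D \<union> set es) (fst u) (snd u) \<and> set (fst u) \<union> set (snd u) \<subseteq> set (fst t) \<union> set (snd t) \<union> set es"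
    using steps_Cons.IH[OF d(1,2,3) conjunct1[OF R] d(4)] R by blast
  then show ?case using R by auto
qed

end

context smod begin

lemma pre_sub: "pre L x \<subseteq> set L"
  unfolding pre_def by (auto dest: set_takeWhileD)

lemma LA_key:
  assumes W: "finite W" "W \<subseteq> V" "sum c W \<le> B" and I: "ILA X Y"
    and P: "\<forall>e\<in>W. e \<in> set X \<or> e \<in> set Y \<or> marg f e (set X) < c e * f (set X) / B"
  shows "f (set X \<union> W) \<le> 2 * f (set X) + f (set Y)"
proof -
  have dY: "distinct Y" and sX: "set X \<subseteq> V" and sY: "set Y \<subseteq> V"
    and gY: "grows f (\<lambda>a Z. c a * f Z / B) Y"
    and JY: "\<forall>e\<in>set Y. marg f e (set X) \<le> marg f e (pre Y e) \<or> marg f e (set X) < c e * f (set X) / B"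
    using I unfolding ILA_def by auto
  define K where "K = f (set X) / B"
  have K0: "0 \<le> K" unfolding K_def using fnn[OF sX] Bpos by simp
  define h where "h w = (if w \<in> set Y then marg f w (pre Y w) else 0)" for w
  have gnn: "\<forall>q\<in>set Y. 0 \<le> marg f q (pre Y q)"
  proof
    fix q assume q: "q \<in> set Y"
    have "c q * f (pre Y q) / B \<le> marg f q (pre Y q)" using grows_pre[OF gY dY q] by simp
    moreover have "0 \<le> f (pre Y q)" using fnn pre_sub[of Y q] sY by blast
    moreover have "0 < c q" using cpos q sY by auto
    ultimately show "0 \<le> marg f q (pre Y q)" using Bpos
      by (smt (verit) divide_nonneg_pos mult_nonneg_nonneg)
  qed
  have hnn: "0 \<le> h w" for w unfolding h_def using gnn by auto
  have each: "marg f w (set X) \<le> h w + c w * K" if w: "w \<in> W - set X" for w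
  proof -
    have cw: "0 \<le> c w * K" using cpos[of w] w W K0 by auto
    have "e \<in> set Y \<or> marg f w (set X) < c w * K" if "e = w" for e
      using P w that unfolding K_def by auto
    then consider (Y) "w \<in> set Y" | (R) "marg f w (set X) < c w * K" by blast
    then show ?thesis
    proof cases
      case Y
      then have "marg f w (set X) \<le> h w \<or> marg f w (set X) < c w * K"
        using JY unfolding h_def K_def by auto
      then show ?thesis using cw hnn[of w] by linarith
    next
      case R then show ?thesis using hnn[of w] by linarith
    qed
  qed
  have "f (set X \<union> W) \<le> f (set X) + (\<Sum>w\<in>W - set X. marg f w (set X))"
    using union_bound[OF W(1,2) sX] .
  also have "(\<Sum>w\<in>W - set X. marg f w (set X)) \<le> (\<Sum>w\<in>W - set X. h w + c w * K)"
    using each by (rule sum_mono)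
  also have "\<dots> \<le> (\<Sum>w\<in>W. h w + c w * K)"
    using W hnn K0 by (intro sum_mono2) (auto intro!: add_nonneg_nonneg mult_nonneg_nonneg less_imp_le[OF cpos])
  also have "\<dots> = (\<Sum>w\<in>W. h w) + sum c W * K"
    by (simp add: sum.distrib sum_distrib_right)
  also have "(\<Sum>w\<in>W. h w) \<le> f (set Y)"
    using sum_h_le[OF W(1) dY gnn] f0 unfolding h_def by simp
  also have "sum c W * K \<le> B * K" using W(3) K0 by (simp add: mult_right_mono)
  also have "B * K = f (set X)" unfolding K_def using Bpos by simp
  finally show ?thesis by linarith
qed

lemma LA_growth:
  assumes "grows f (\<lambda>a Z. c a * f Z / B) (A @ D)" "distinct (A @ D)" "set (A @ D) \<subseteq> V"
  shows "sum c (set D) * f (set A) / B \<le> f (set (A @ D)) - f (set A)"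
  using assms
proof (induction D rule: rev_induct)
  case Nil then show ?case by simp
next
  case (snoc a D)
  have g: "grows f (\<lambda>a Z. c a * f Z / B) ((A @ D) @ [a])" using snoc.prems(1) by (simp only: append_assoc)
  have gs: "grows f (\<lambda>a Z. c a * f Z / B) (A @ D) \<and> c a * f (set (A @ D)) / B \<le> marg f a (set (A @ D))"
    using iffD1[OF grows_snoc g] by (simp only:)
  have d: "distinct ((A @ D) @ [a])" using snoc.prems(2) by (simp only: append_assoc)
  then have d1: "distinct (A @ D)" and na: "a \<notin> set (A @ D)" by auto
  have s: "set ((A @ D) @ [a]) \<subseteq> V" using snoc.prems(3) by (simp only: append_assoc)
  then have s1: "set (A @ D) \<subseteq> V" and aV: "a \<in> V" unfolding set_snoc by auto
  have IH: "sum c (set D) * f (set A) / B \<le> f (set (A @ D)) - f (set A)"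
    using snoc.IH[OF conjunct1[OF gs] d1 s1] .
  have sA: "set A \<subseteq> V" using s1 by auto
  have fA: "0 \<le> f (set A)" using fnn[OF sA] .
  have sD: "set D \<subseteq> V" using s1 by auto
  have cD: "0 \<le> sum c (set D)" using cpos sD by (intro sum_nonneg) (auto intro: less_imp_le)
  have "0 \<le> sum c (set D) * f (set A) / B" using cD fA Bpos by simp
  then have mon: "f (set A) \<le> f (set (A @ D))" using IH by linarith
  have m2: "c a * f (set A) / B \<le> c a * f (set (A @ D)) / B" using cf_mono[OF aV mon] .
  have naD: "a \<notin> set D" using na by simp
  have sc: "sum c (set (D @ [a])) = c a + sum c (set D)" using naD by simp
  have e1: "f (set ((A @ D) @ [a])) = f (set (A @ D)) + marg f a (set (A @ D))"
    unfolding set_snoc marg_def by linarith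
  have "sum c (set (D @ [a])) * f (set A) / B = c a * f (set A) / B + sum c (set D) * f (set A) / B"
    unfolding sc by (simp add: distrib_right add_divide_distrib)
  then show ?case using e1 IH m2 gs by (simp only: append_assoc) linarith
qed

end

context smod begin

lemma suffix:
  assumes d: "distinct L" and s: "set L \<subseteq> V" and half: "\<forall>x\<in>set L. c x \<le> B / 2"
    and g: "grows f (\<lambda>a Z. c a * f Z / B) L" and bs: "budget_suffix c B L T"
  shows "f (set L) \<le> 3 * f T"
proof -
  obtain j where j: "j \<le> length L" "T = set (drop (length L - j) L)" "sum c T \<le> B"
    and mx: "\<forall>j'\<le>length L. sum c (set (drop (length L - j') L)) \<le> B \<longrightarrow>
              sum c (set (drop (length L - j') L)) \<le> sum c T"
    using bs unfolding budget_suffix_def by blast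
  define n where "n = length L - j"
  have L: "L = take n L @ drop n L" by simp
  have T: "T = set (drop n L)" using j(2) n_def by simp
  have sT: "T \<subseteq> V" using T s set_drop_subset by fastforce
  have sA: "set (take n L) \<subseteq> V" using s set_take_subset by fastforce
  have fT: "0 \<le> f T" using fnn[OF sT] .
  have fA0: "0 \<le> f (set (take n L))" using fnn[OF sA] .
  have setL: "set L = set (take n L) \<union> T" using T L by (metis set_append)
  have sub: "f (set L) \<le> f (set (take n L)) + f T" using subadd[OF sA sT] setL by simp
  have "f (set (take n L)) \<le> 2 * f T"
  proof (cases "j = length L")
    case True
    then have "n = 0" using n_def by simp
    then show ?thesis using f0 fT by simp
  next
    case False
    define m where "m = n - 1"
    have n1: "n = Suc m" "m < length L" using False j(1) n_def m_def by auto
    have dm: "drop m L = L ! m # drop n L" using n1 Cons_nth_drop_Suc by metis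
    have "distinct (drop m L)" using d by simp
    then have nT: "L ! m \<notin> T" using dm T by simp
    have Lm: "L ! m \<in> set L" using n1 by simp
    have cm: "0 < c (L ! m)" "c (L ! m) \<le> B / 2" using cpos Lm s half by auto
    have cost: "sum c (set (drop m L)) = c (L ! m) + sum c T"
      using dm T nT by simp
    have "length L - Suc j = m" using n_def m_def by simp
    then have "sum c (set (drop m L)) \<le> B \<longrightarrow> sum c (set (drop m L)) \<le> sum c T"
      using mx False j(1) by (metis Suc_leI le_neq_implies_less)
    then have "B < sum c (set (drop m L))" using cost cm by linarith
    then have cT: "B / 2 \<le> sum c T" using cost cm by linarith
    have gr: "grows f (\<lambda>a Z. c a * f Z / B) (take n L @ drop n L)" using g by simp
    have "sum c (set (drop n L)) * f (set (take n L)) / B \<le> f (set (take n L @ drop n L)) - f (set (take n L))"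
      using LA_growth[OF gr] d s by simp
    then have G: "sum c T * f (set (take n L)) / B \<le> f (set L) - f (set (take n L))" using T by simp
    have "B / 2 * f (set (take n L)) \<le> sum c T * f (set (take n L))"
      using cT fA0 by (rule mult_right_mono)
    then have "B / 2 * f (set (take n L)) / B \<le> sum c T * f (set (take n L)) / B"
      by (rule divide_right_mono) (use Bpos in simp)
    moreover have "B / 2 * f (set (take n L)) / B = f (set (take n L)) / 2" using Bpos by simp
    ultimately show ?thesis using G sub by linarith
  qed
  then show ?thesis using sub by linarith
qed

lemma LA_bound:
  assumes LA: "LA_output f c V B S'" and O: "Opt \<subseteq> V" "r \<in> Opt" "\<forall>x\<in>Opt - {r}. c x \<le> B / 2"
    "sum c (Opt - {r}) \<le> B"
  shows "f Opt \<le> 19 * f S' \<and> f {r} \<le> f S'"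
proof -
  obtain ord X Y X' Y' emax where
    o1: "distinct ord" "set ord = {e \<in> V. c e \<le> B / 2}"
    and st: "steps (la_step f c B) ord ([], []) (X, Y)"
    and bX: "budget_suffix c B X X'" and bY: "budget_suffix c B Y Y'"
    and em: "emax \<in> V" "\<forall>e\<in>V. f {e} \<le> f {emax}"
    and fS: "f X' \<le> f S'" "f Y' \<le> f S'" "f {emax} \<le> f S'"
    using LA unfolding LA_output_def by blast
  have sord: "set ord \<subseteq> V" using o1 by auto
  have PL0: "PL {} [] []" unfolding PL_def by simp
  have R: "ILA X Y \<and> PL ({} \<union> set ord) X Y \<and> set X \<union> set Y \<subseteq> set [] \<union> set [] \<union> set ord"
    using LA_steps[OF st o1(1) sord _ _ empty_subsetI, of] ILA_Nil PL0 by simp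
  have st2: "steps (la_step f c B) ord (prod.swap ([], [])) (prod.swap (X, Y))"
    using steps_map[of "la_step f c B" "la_step f c B" prod.swap, OF la_step_swap st] .
  then have st2': "steps (la_step f c B) ord ([], []) (Y, X)" by simp
  have R2: "ILA Y X \<and> PL ({} \<union> set ord) Y X"
    using LA_steps[OF st2' o1(1) sord _ _ empty_subsetI, of] ILA_Nil PL0 by simp
  define O' where "O' = Opt - {r}"
  have finO: "finite O'" using O(1) finV O'_def by (auto intro: finite_subset)
  have O'V: "O' \<subseteq> V" using O(1) O'_def by auto
  have O'ord: "O' \<subseteq> set ord" using O(1) O(3) o1(2) O'_def by auto
  have cO: "sum c O' \<le> B" using O(4) O'_def by simp
  have I: "ILA X Y" using R by blast
  have I2: "ILA Y X" using R2 by blast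
  have k1: "f (set X \<union> O') \<le> 2 * f (set X) + f (set Y)"
    using LA_key[OF finO O'V cO I] R O'ord unfolding PL_def by auto
  have k2: "f (set Y \<union> O') \<le> 2 * f (set Y) + f (set X)"
    using LA_key[OF finO O'V cO I2] R2 O'ord unfolding PL_def by auto
  have dj: "set X \<inter> set Y = {}" and sX: "set X \<subseteq> V" and sY: "set Y \<subseteq> V"
    and dX: "distinct X" and dY: "distinct Y"
    and gX: "grows f (\<lambda>a Z. c a * f Z / B) X" and gY: "grows f (\<lambda>a Z. c a * f Z / B) Y"
    using I unfolding ILA_def by auto
  have tw: "f O' \<le> f (O' \<union> set X) + f (O' \<union> set Y)" using twin[OF O'V sX sY dj] .
  have hX: "\<forall>x\<in>set X. c x \<le> B / 2" using R o1(2) by auto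
  have hY: "\<forall>x\<in>set Y. c x \<le> B / 2" using R o1(2) by auto
  have sfX: "f (set X) \<le> 3 * f X'" using suffix[OF dX sX hX gX bX] .
  have sfY: "f (set Y) \<le> 3 * f Y'" using suffix[OF dY sY hY gY bY] .
  have rV: "{r} \<subseteq> V" using O by auto
  have "Opt = O' \<union> {r}" using O(2) O'_def by auto
  then have "f Opt \<le> f O' + f {r}" using subadd[OF O'V rV] by simp
  moreover have fr: "f {r} \<le> f S'"
  proof -
    have "r \<in> V" using O by auto
    then have "f {r} \<le> f {emax}" using em(2) by blast
    then show ?thesis using fS(3) by linarith
  qed
  moreover have "f (O' \<union> set X) = f (set X \<union> O')" "f (O' \<union> set Y) = f (set Y \<union> O')"
    by (simp_all add: Un_commute)
  ultimately show ?thesis using tw k1 k2 sfX sfY fS by linarith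
qed

end

context smod begin

lemma dla_main:
  assumes ep: "0 < \<epsilon>" "\<epsilon> < 1" and G: "0 < \<Gamma>"
    and th0: "th0 = 19 * \<Gamma> / (6 * \<epsilon> * B)" and thr: "thr = \<Gamma> * (1 - \<epsilon>) / (6 * B)"
    and ks: "\<forall>i<k. thr \<le> th0 * (1 - \<epsilon>) ^ i" "\<not> (thr \<le> th0 * (1 - \<epsilon>) ^ k)"
    and ph: "phase1_iter f c B th0 \<epsilon> ord k (Xl, Yl)" and ordV: "set ord = V"
    and fS: "\<Gamma> \<le> fS" "f (set Xl) \<le> fS" "f (set Yl) \<le> fS"
    and O: "Opt \<subseteq> V" "r \<in> Opt" "sum c (Opt - {r}) \<le> \<epsilon> * B" "f {r} \<le> \<Gamma>" "f Opt \<le> 19 * \<Gamma>"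
    and nE: "fS < (1 - \<epsilon>)^2 / 6 * f Opt"
  shows "\<exists>X' \<subseteq> set Xl. f (Opt \<union> X') \<le> 3 * fS + \<epsilon> * f Opt / 6"
proof -
  define u where "u = \<Gamma> / (6 * B)"
  have u0: "0 < u" unfolding u_def using G Bpos by simp
  have thru: "thr = u * (1 - \<epsilon>)" unfolding thr u_def by simp
  have th0u: "th0 = u * (19 / \<epsilon>)" unfolding th0 u_def by (simp add: field_simps)
  define \<theta> where "\<theta> i = th0 * (1 - \<epsilon>) ^ i" for i
  define \<tau> where "\<tau> = f Opt / (6 * B)"
  have e1: "0 < 1 - \<epsilon>" "1 - \<epsilon> < 1" using ep by auto
  have sq: "0 < (1 - \<epsilon>)^2 / 6" using e1 by simp
  have opt0: "0 < f Opt"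
  proof (rule ccontr)
    assume "\<not> 0 < f Opt"
    then have "(1 - \<epsilon>)^2 / 6 * f Opt \<le> 0" using sq by (simp add: mult_nonneg_nonpos)
    then show False using nE fS(1) G by linarith
  qed
  have "(1 - \<epsilon>)^2 \<le> 1" using e1 by (intro power_le_one) auto
  then have sq1: "(1 - \<epsilon>)^2 / 6 \<le> 1" by simp
  have "(1 - \<epsilon>)^2 / 6 * f Opt \<le> f Opt" using sq1 opt0 by (simp add: mult_left_le_one_le)
  then have GO: "\<Gamma> < f Opt" using nE fS(1) by linarith
  have uT: "u < \<tau>" unfolding u_def \<tau>_def using GO Bpos by (simp add: divide_strict_right_mono)
  have tau0: "0 < \<tau>" unfolding \<tau>_def using opt0 Bpos by simp
  have th00: "0 < th0" using th0u u0 ep by simp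
  have \<theta>_dec: "\<theta> j \<le> \<theta> i" if "i \<le> j" for i j
    unfolding \<theta>_def using th00 e1 that by (simp add: power_decreasing)
  have \<theta>_Suc: "\<theta> (Suc i) = \<theta> i * (1 - \<epsilon>)" for i unfolding \<theta>_def by simp
  have k1: "0 < k"
  proof (rule ccontr)
    assume "\<not> 0 < k"
    then have "k = 0" by simp
    moreover have "thr \<le> th0"
    proof -
      have "u * (1 - \<epsilon>) \<le> u * 1" using u0 e1 by simp
      moreover have "1 \<le> 19 / \<epsilon>" using ep by (simp add: le_divide_eq)
      then have "u * 1 \<le> u * (19 / \<epsilon>)" using u0 by (intro mult_left_mono) auto
      ultimately show ?thesis using thru th0u by linarith
    qed
    ultimately show False using ks(2) by simp
  qed
  have thk: "\<theta> (k - 1) < u"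
  proof -
    have "\<theta> k = \<theta> (k - 1) * (1 - \<epsilon>)" using \<theta>_Suc[of "k-1"] k1 by simp
    moreover have "\<theta> k < u * (1 - \<epsilon>)" using ks(2) thru unfolding \<theta>_def by linarith
    ultimately have "\<theta> (k - 1) * (1 - \<epsilon>) < u * (1 - \<epsilon>)" by linarith
    then show ?thesis using e1 by simp
  qed
  have th0T: "\<tau> < \<theta> 0"
  proof -
    have "\<tau> \<le> 19 * u" unfolding \<tau>_def u_def using O(5) Bpos by (simp add: divide_right_mono)
    moreover have "19 * u < u * (19 / \<epsilon>)" using u0 ep by (simp add: field_simps)
    ultimately show ?thesis unfolding \<theta>_def using th0u by simp
  qed
  have exP: "\<theta> (k - 1) \<le> \<tau>" using thk uT by simp
  define p where "p = (LEAST p. \<theta> p \<le> \<tau>)"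
  have pP: "\<theta> p \<le> \<tau>" unfolding p_def using exP by (rule LeastI)
  have pk: "p \<le> k - 1" unfolding p_def using exP by (rule Least_le)
  have p0: "p \<noteq> 0"
  proof
    assume "p = 0" then show False using pP th0T by simp
  qed
  have pm: "\<tau> < \<theta> (p - 1)"
  proof -
    have "p - 1 < p" using p0 by simp
    then have "\<not> \<theta> (p - 1) \<le> \<tau>" unfolding p_def by (rule not_less_Least)
    then show ?thesis by simp
  qed
  have thp: "(1 - \<epsilon>) * \<tau> < \<theta> p"
  proof -
    have "\<theta> p = \<theta> (p - 1) * (1 - \<epsilon>)" using \<theta>_Suc[of "p-1"] p0 by simp
    then show ?thesis using pm e1 by (simp add: mult.commute)
  qed
  have thp0: "0 < \<theta> p" using thp tau0 e1 by (smt (verit) mult_pos_pos)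
  obtain st' where st': "phase1_iter f c B th0 \<epsilon> ord (Suc p) st'"
    and ext: "\<exists>zs ws. fst (Xl, Yl) = fst st' @ zs \<and> snd (Xl, Yl) = snd st' @ ws"
  proof -
    have "Suc p \<le> k" using pk k1 by linarith
    then show ?thesis using phase1_prefix[OF ph, of "Suc p"] that by blast
  qed
  define Xp where "Xp = fst st'"
  define Yp where "Yp = snd st'"
  obtain zs ws where ext': "Xl = Xp @ zs" "Yl = Yp @ ws" using ext Xp_def Yp_def by auto
  obtain s0 where s0: "phase1_iter f c B th0 \<epsilon> ord p s0"
    and stp: "steps (dla_step f c B (th0 * (1 - \<epsilon>) ^ p)) ord s0 st'"
    using st' by (cases rule: phase1_iter.cases) auto
  have sord: "set ord \<subseteq> V" using ordV by simp
  have I0: "IDL (\<theta> p) (fst s0) (snd s0)"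
    using phase1_IDL[OF s0 _ sord] \<theta>_dec unfolding \<theta>_def by auto
  have Ip: "IDL (\<theta> p) Xp Yp"
    using phase1_IDL[OF st' _ sord] \<theta>_dec unfolding \<theta>_def Xp_def Yp_def by (auto simp: less_Suc_eq_le)
  have PDp: "PD (\<theta> p) V Xp Yp"
    using PD_steps[OF stp I0 _ sord empty_subsetI] ordV unfolding \<theta>_def PD_def Xp_def Yp_def by auto
  have Ik: "IDL (\<theta> (k - 1)) Xl Yl"
    using phase1_IDL[OF ph _ sord] \<theta>_dec unfolding \<theta>_def by auto
  have thk0: "0 \<le> \<theta> (k - 1)"
  proof -
    have "thr \<le> \<theta> (k - 1)" using ks(1) k1 unfolding \<theta>_def by simp
    moreover have "0 \<le> thr" using thru u0 e1 by simp
    ultimately show ?thesis by linarith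
  qed
  have dX: "distinct Xp" and dY: "distinct Yp" and sX: "set Xp \<subseteq> V" and sY: "set Yp \<subseteq> V"
    and gX: "grows f (\<lambda>a Z. \<theta> p * c a) Xp" and gY: "grows f (\<lambda>a Z. \<theta> p * c a) Yp"
    and JY: "\<forall>e\<in>set Yp. B < c e + sum c (set Xp) \<or> marg f e (set Xp) \<le> marg f e (pre Yp e)"
    using Ip unfolding IDL_def by auto
  have gXl: "grows f (\<lambda>a Z. \<theta> (k - 1) * c a) (Xp @ zs)" and gYl: "grows f (\<lambda>a Z. \<theta> (k - 1) * c a) (Yp @ ws)"
    and sXl: "set Xl \<subseteq> V" and sYl: "set Yl \<subseteq> V"
    using Ik ext' unfolding IDL_def by auto
  have fXp: "f (set Xp) \<le> fS"
    using mono_T[OF gXl thk0] sXl ext' cpos fS(2) by (smt (verit) Un_iff less_imp_le set_append subset_iff)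
  have fYp: "f (set Yp) \<le> fS"
    using mono_T[OF gYl thk0] sYl ext' cpos fS(3) by (smt (verit) Un_iff less_imp_le set_append subset_iff)
  define O' where "O' = Opt - {r}"
  have finO: "finite O'" using O(1) finV O'_def by (auto intro: finite_subset)
  have O'V: "O' \<subseteq> V" using O(1) O'_def by auto
  have cO: "sum c O' \<le> \<epsilon> * B" using O(3) O'_def by simp
  have co: "c q \<le> \<epsilon> * B" if "q \<in> O'" for q
  proof -
    have "c q \<le> sum c O'" using that finO O'V cpos by (intro member_le_sum) (auto intro: less_imp_le)
    then show ?thesis using cO by linarith
  qed
  show ?thesis
  proof (cases "\<exists>q\<in>O'. q \<notin> set Xp \<and> B < c q + sum c (set Xp)")
    case True
    then obtain q where q: "q \<in> O'" "B < c q + sum c (set Xp)" by blast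
    have cX: "(1 - \<epsilon>) * B < sum c (set Xp)" using co[OF q(1)] q(2) by (simp add: algebra_simps)
    have gr: "\<theta> p * sum c (set Xp) \<le> f (set Xp)" using growth_T[OF gX dX] f0 by simp
    have "(1 - \<epsilon>) * \<tau> * ((1 - \<epsilon>) * B) \<le> (1 - \<epsilon>) * \<tau> * sum c (set Xp)"
      using cX e1 tau0 by (intro mult_left_mono) auto
    also have "\<dots> \<le> \<theta> p * sum c (set Xp)"
    proof (rule mult_right_mono)
      show "(1 - \<epsilon>) * \<tau> \<le> \<theta> p" using thp by simp
      have "0 < (1 - \<epsilon>) * B" using e1 Bpos by simp
      then show "0 \<le> sum c (set Xp)" using cX by linarith
    qed
    finally have "(1 - \<epsilon>) * \<tau> * ((1 - \<epsilon>) * B) \<le> f (set Xp)" using gr by linarith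
    moreover have "(1 - \<epsilon>) * \<tau> * ((1 - \<epsilon>) * B) = (1 - \<epsilon>)^2 / 6 * f Opt"
      unfolding \<tau>_def using Bpos by (simp add: field_simps power2_eq_square)
    ultimately show ?thesis using nE fXp by linarith
  next
    case False
    define h where "h w = (if w \<in> set Yp then marg f w (pre Yp w) else 0)" for w
    have gnn: "\<forall>q\<in>set Yp. 0 \<le> marg f q (pre Yp q)"
    proof
      fix q assume q: "q \<in> set Yp"
      have "\<theta> p * c q \<le> marg f q (pre Yp q)" using grows_pre[OF gY dY q] by simp
      moreover have "0 < c q" using cpos q sY by auto
      ultimately show "0 \<le> marg f q (pre Yp q)" using thp0 by (smt (verit) mult_pos_pos)
    qed
    have hnn: "0 \<le> h w" for w unfolding h_def using gnn by auto
    have each: "marg f w (set Xp) \<le> h w + \<tau> * c w" if w: "w \<in> O' - set Xp" for w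
    proof -
      have cw: "0 \<le> \<tau> * c w" using cpos[of w] w O'V tau0 by auto
      have nb: "\<not> B < c w + sum c (set Xp)" using False w by blast
      have "w \<in> set Xp \<or> w \<in> set Yp \<or> B < c w + sum c (set Xp) \<or> marg f w (set Xp) < \<theta> p * c w"
        using PDp w O'V unfolding PD_def by blast
      then consider (Y) "w \<in> set Yp" | (R) "marg f w (set Xp) < \<theta> p * c w" using w nb by blast
      then show ?thesis
      proof cases
        case Y
        then have "marg f w (set Xp) \<le> h w" using JY nb unfolding h_def by auto
        then show ?thesis using cw by linarith
      next
        case R
        have "\<theta> p * c w \<le> \<tau> * c w" using pP cpos[of w] w O'V by (intro mult_right_mono) auto
        then show ?thesis using R hnn[of w] by linarith
      qed
    qed
    have "f (set Xp \<union> O') \<le> f (set Xp) + (\<Sum>w\<in>O' - set Xp. marg f w (set Xp))"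
      using union_bound[OF finO O'V sX] .
    also have "(\<Sum>w\<in>O' - set Xp. marg f w (set Xp)) \<le> (\<Sum>w\<in>O' - set Xp. h w + \<tau> * c w)"
      using each by (rule sum_mono)
    also have "\<dots> \<le> (\<Sum>w\<in>O'. h w + \<tau> * c w)"
      using finO hnn tau0 O'V by (intro sum_mono2) (auto intro!: add_nonneg_nonneg mult_nonneg_nonneg less_imp_le[OF cpos])
    also have "\<dots> = (\<Sum>w\<in>O'. h w) + \<tau> * sum c O'"
      by (simp add: sum.distrib sum_distrib_left)
    also have "(\<Sum>w\<in>O'. h w) \<le> f (set Yp)"
      using sum_h_le[OF finO dY gnn] f0 unfolding h_def by simp
    also have "\<tau> * sum c O' \<le> \<tau> * (\<epsilon> * B)" using cO tau0 by (simp add: mult_left_mono)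
    also have "\<tau> * (\<epsilon> * B) = \<epsilon> * f Opt / 6" unfolding \<tau>_def using Bpos by simp
    finally have b1: "f (set Xp \<union> O') \<le> f (set Xp) + (f (set Yp) + \<epsilon> * f Opt / 6)" by simp
    have rV: "{r} \<subseteq> V" using O by auto
    have XO: "set Xp \<union> O' \<subseteq> V" using sX O'V by auto
    have "Opt \<union> set Xp = (set Xp \<union> O') \<union> {r}" using O(2) O'_def by auto
    then have "f (Opt \<union> set Xp) \<le> f (set Xp \<union> O') + f {r}" using subadd[OF XO rV] by simp
    then have "f (Opt \<union> set Xp) \<le> 3 * fS + \<epsilon> * f Opt / 6" using b1 fXp fYp O(4) fS(1) by linarith
    moreover have "set Xp \<subseteq> set Xl" using ext' by simp
    ultimately show ?thesis by blast
  qed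
qed

end

theorem lemma4:
  fixes f :: "'a set \<Rightarrow> real" and c :: "'a \<Rightarrow> real" and V :: "'a set"
    and B eps :: real and S X Y Opt :: "'a set" and r :: 'a
  assumes "finite V"
    and "f {} = 0"
    and "\<forall>A. A \<subseteq> V \<longrightarrow> f A \<ge> 0"
    and "submodular_on V f"
    and "\<forall>e\<in>V. c e > 0"
    and "B > 0"
    and "\<forall>e\<in>V. c e \<le> B"
    and "0 < eps" and "eps < 1"
    and "DLA_run f c V B eps S X Y"
    and "Opt \<subseteq> V" and "sum c Opt \<le> B"
    and "\<forall>T. T \<subseteq> V \<and> sum c T \<le> B \<longrightarrow> f T \<le> f Opt"
    and "r \<in> Opt" and "\<forall>x\<in>Opt. c x \<le> c r"
    and "c r \<ge> (1 - eps / 14) * B"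
  shows "(f S \<ge> (1 - eps / 14)^2 / 6 * f Opt \<or>
          (\<exists>X' \<subseteq> X. f (Opt \<union> X') \<le> 2 * f S +
              max ((1 - eps / 14) * f Opt / 6) (f S + (eps / 14) * f Opt / 6)))
       \<and> (f S \<ge> (1 - eps / 14)^2 / 6 * f Opt \<or>
          (\<exists>Y' \<subseteq> Y. f (Opt \<union> Y') \<le> 2 * f S +
              max ((1 - eps / 14) * f Opt / 6) (f S + (eps / 14) * f Opt / 6)))"
proof -
  interpret smod f V c B using assms(1-6) by unfold_locales auto
  define \<epsilon> where "\<epsilon> = eps / 14"
  obtain S' ord Xl Yl k XL YL where
    LA: "LA_output f c V B S'" and ordV: "set ord = V"
    and ks1: "\<forall>i<k. f S' * (1 - eps / 14) / (6 * B) \<le> 19 * f S' / (6 * (eps / 14) * B) * (1 - eps / 14) ^ i"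
    and ks2: "\<not> (f S' * (1 - eps / 14) / (6 * B) \<le> 19 * f S' / (6 * (eps / 14) * B) * (1 - eps / 14) ^ k)"
    and ph: "phase1_iter f c B (19 * f S' / (6 * (eps / 14) * B)) (eps / 14) ord k (Xl, Yl)"
    and XY: "X = set Xl" "Y = set Yl"
    and fs: "f S' \<le> f S" "f X \<le> f S" "f Y \<le> f S"
    using assms(10) unfolding DLA_run_def Let_def by blast
  have e: "0 < \<epsilon>" "\<epsilon> < 1" "\<epsilon> < 1 / 14" using assms(8,9) unfolding \<epsilon>_def by auto
  have fin: "finite Opt" using assms(1,11) by (auto intro: finite_subset)
  have sr: "sum c Opt = c r + sum c (Opt - {r})" using sum.remove[OF fin assms(14)] .
  have cO: "sum c (Opt - {r}) \<le> \<epsilon> * B" using sr assms(12,16) unfolding \<epsilon>_def by (simp add: algebra_simps)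
  have cx: "c x \<le> \<epsilon> * B" if "x \<in> Opt - {r}" for x
  proof -
    have "c x \<le> sum c (Opt - {r})" using that fin assms(11) cpos
      by (intro member_le_sum) (auto intro: less_imp_le)
    then show ?thesis using cO by linarith
  qed
  have "\<epsilon> * B \<le> B / 2" using e Bpos by simp
  then have half: "\<forall>x\<in>Opt - {r}. c x \<le> B / 2" using cx by fastforce
  have cO1: "sum c (Opt - {r}) \<le> B" using cO e Bpos by (smt (verit) mult_le_cancel_right2)
  have LB: "f Opt \<le> 19 * f S' \<and> f {r} \<le> f S'" using LA_bound[OF LA assms(11,14) half cO1] .
  have fr0: "0 \<le> f {r}" using fnn assms(11,14) by auto
  have G: "0 < f S'"
  proof (rule ccontr)
    assume "\<not> 0 < f S'"
    then have "f S' = 0" using LB fr0 by linarith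
    then show False using ks2 by simp
  qed
  have fS: "f (set Xl) \<le> f S" "f (set Yl) \<le> f S" using fs XY by auto
  have ph2: "phase1_iter f c B (19 * f S' / (6 * (eps / 14) * B)) (eps / 14) ord k (Yl, Xl)"
    using phase1_swap[OF ph] by simp
  show ?thesis
  proof (cases "f S \<ge> (1 - eps / 14)^2 / 6 * f Opt")
    case True then show ?thesis by simp
  next
    case False
    then have nE: "f S < (1 - \<epsilon>)^2 / 6 * f Opt" unfolding \<epsilon>_def by simp
    have M1: "\<exists>X' \<subseteq> set Xl. f (Opt \<union> X') \<le> 3 * f S + \<epsilon> * f Opt / 6"
      using dla_main[OF e(1,2) G refl refl ks1[folded \<epsilon>_def] ks2[folded \<epsilon>_def] ph[folded \<epsilon>_def] ordV
          fs(1) fS(1,2) assms(11,14) cO _ _ nE] LB by (simp add: \<epsilon>_def)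
    have M2: "\<exists>X' \<subseteq> set Yl. f (Opt \<union> X') \<le> 3 * f S + \<epsilon> * f Opt / 6"
      using dla_main[OF e(1,2) G refl refl ks1[folded \<epsilon>_def] ks2[folded \<epsilon>_def] ph2[folded \<epsilon>_def] ordV
          fs(1) fS(2,1) assms(11,14) cO _ _ nE] LB by (simp add: \<epsilon>_def)
    have le: "3 * f S + \<epsilon> * f Opt / 6 \<le> 2 * f S +
              max ((1 - eps / 14) * f Opt / 6) (f S + (eps / 14) * f Opt / 6)"
      unfolding \<epsilon>_def by simp
    show ?thesis using M1 M2 le XY by (meson order_trans)
  qed
qed


end
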